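(* Let $t=a^id^j$ and let $W$ be a finite-dimensional left $\mathcal{O}_{nc}(B)$-comodule all of whose weights equal $t$. Then the coaction of $W$ is $w\mapsto t\otimes w$ for all $w\in W$; in particular $W$ is a direct sum of copies of $k_t$ and its coaction takes values in the subcoalgebra of $\mathcal{O}_{nc}(B)$ spanned by the monomials $a^pd^q$.
   Context: $\mathcal{O}_{nc}(\mathrm{GL}_2)$ is the Hopf algebra generated by $a,b,c,d,\delta,\delta^{-1}$ with relations $ac=ca$, $bd=db$, $ad-cb=\delta=da-bc$, $\delta\delta^{-1}=1=\delta^{-1}\delta$, $a\delta^{-1}d-b\delta^{-1}c=1=d\delta^{-1}a-c\delta^{-1}b$, $b\delta^{-1}a=a\delta^{-1}b$, $c\delta^{-1}d=d\delta^{-1}c$, with $\Delta(a)=a\otimes a+b\otimes c$, $\Delta(b)=a\otimes b+b\otimes d$, $\Delta(c)=c\otimes a+d\otimes c$, $\Delta(d)=c\otimes b+d\otimes d$, $\Delta(\delta^{\pm1})=\delta^{\pm1}\otimes\delta^{\pm1}$. $\mathcal{O}_{nc}(B)=\mathcal{O}_{nc}(\mathrm{GL}_2)/(b)$ (a quotient Hopf algebra; images of $a,d$ are invertible grouplikes), and $\mathcal{O}(T)=\mathcal{O}_{nc}(\mathrm{GL}_2)/(b,c)\cong k[a^{\pm1},d^{\pm1}]$, a quotient of $\mathcal{O}_{nc}(B)$. The weights of an $\mathcal{O}_{nc}(B)$-comodule $W$ are the monomials $t$ with nonzero weight space $W_t=\{w: w\mapsto t\otimes w\}$ for the induced $\mathcal{O}(T)$-coaction.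 $k_t$ is the one-dimensional comodule $1\mapsto t\otimes1$. *)

theory Defs
  imports "HOL-Library.Poly_Mapping"
begin

text \<open>Generators: a, b, c, d, delta (Dl) and delta inverse (Di).\<close>
datatype gen = A | B | C | D | Dl | Di

type_synonym word = "gen list"

type_synonym 'k fa = "word \<Rightarrow>\<^sub>0 'k"

type_synonym 'k fa2 = "(word \<times> word) \<Rightarrow>\<^sub>0 'k"

definition wd :: "word \<Rightarrow> 'k::field fa" where
  "wd u = Poly_Mapping.single u 1"

definition fa_smult :: "'k::field \<Rightarrow> 'k fa \<Rightarrow> 'k fa" where
  "fa_smult c f = (\<Sum>u\<in>Poly_Mapping.keys f. Poly_Mapping.single u (c * Poly_Mapping.lookup f u))"

definition fa_mult :: "'k::field fa \<Rightarrow> 'k fa \<Rightarrow> 'k fa" where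
  "fa_mult f g = (\<Sum>u\<in>Poly_Mapping.keys f. \<Sum>v\<in>Poly_Mapping.keys g. Poly_Mapping.single (u @ v) (Poly_Mapping.lookup f u * Poly_Mapping.lookup g v))"

definition tens :: "'k::field fa \<Rightarrow> 'k fa \<Rightarrow> 'k fa2" where
  "tens f g = (\<Sum>u\<in>Poly_Mapping.keys f. \<Sum>v\<in>Poly_Mapping.keys g. Poly_Mapping.single (u, v) (Poly_Mapping.lookup f u * Poly_Mapping.lookup g v))"

definition fa2_smult :: "'k::field \<Rightarrow> 'k fa2 \<Rightarrow> 'k fa2" where
  "fa2_smult c f = (\<Sum>u\<in>Poly_Mapping.keys f. Poly_Mapping.single u (c * Poly_Mapping.lookup f u))"

definition fa2_mult :: "'k::field fa2 \<Rightarrow> 'k fa2 \<Rightarrow> 'k fa2" where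
  "fa2_mult f g = (\<Sum>p\<in>Poly_Mapping.keys f. \<Sum>q\<in>Poly_Mapping.keys g.
      Poly_Mapping.single (fst p @ fst q, snd p @ snd q) (Poly_Mapping.lookup f p * Poly_Mapping.lookup g q))"

inductive_set two_sided_ideal :: "'k::field fa set \<Rightarrow> 'k fa set" for R where
  gen: "r \<in> R \<Longrightarrow> r \<in> two_sided_ideal R"
| zero: "0 \<in> two_sided_ideal R"
| add: "x \<in> two_sided_ideal R \<Longrightarrow> y \<in> two_sided_ideal R \<Longrightarrow> x + y \<in> two_sided_ideal R"
| mult: "x \<in> two_sided_ideal R \<Longrightarrow>
           fa_mult (fa_smult c (wd u)) (fa_mult x (wd v)) \<in> two_sided_ideal R"

text \<open>For a subspace J of the free algebra F, the kernel J (x) F + F (x) J of the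
  projection F (x) F \<rightarrow> (F/J) (x) (F/J).\<close>
inductive_set tens_ideal :: "'k::field fa set \<Rightarrow> 'k fa2 set" for J where
  zero: "0 \<in> tens_ideal J"
| add: "x \<in> tens_ideal J \<Longrightarrow> y \<in> tens_ideal J \<Longrightarrow> x + y \<in> tens_ideal J"
| left: "x \<in> J \<Longrightarrow> tens x y \<in> tens_ideal J"
| right: "y \<in> J \<Longrightarrow> tens x y \<in> tens_ideal J"


definition rels_GL2 :: "'k::field fa set" where
  "rels_GL2 = {
     wd [A,C] - wd [C,A],
     wd [B,D] - wd [D,B],
     wd [A,D] - wd [C,B] - wd [Dl],
     wd [D,A] - wd [B,C] - wd [Dl],
     wd [Dl,Di] - wd [],
     wd [Di,Dl] - wd [],
     wd [A,Di,D] - wd [B,Di,C] - wd [],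
     wd [D,Di,A] - wd [C,Di,B] - wd [],
     wd [B,Di,A] - wd [A,Di,B],
     wd [C,Di,D] - wd [D,Di,C] }"

text \<open>Ideal defining O_nc(GL_2), O_nc(B) = O_nc(GL_2)/(b), O(T) = O_nc(GL_2)/(b,c).\<close>
definition J_GL2 :: "'k::field fa set" where
  "J_GL2 = two_sided_ideal rels_GL2"

definition J_B :: "'k::field fa set" where
  "J_B = two_sided_ideal (rels_GL2 \<union> {wd [B]})"

definition J_T :: "'k::field fa set" where
  "J_T = two_sided_ideal (rels_GL2 \<union> {wd [B], wd [C]})"

fun Delta_gen :: "gen \<Rightarrow> 'k::field fa2" where
  "Delta_gen A = tens (wd [A]) (wd [A]) + tens (wd [B]) (wd [C])"
| "Delta_gen B = tens (wd [A]) (wd [B]) + tens (wd [B]) (wd [D])"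
| "Delta_gen C = tens (wd [C]) (wd [A]) + tens (wd [D]) (wd [C])"
| "Delta_gen D = tens (wd [C]) (wd [B]) + tens (wd [D]) (wd [D])"
| "Delta_gen Dl = tens (wd [Dl]) (wd [Dl])"
| "Delta_gen Di = tens (wd [Di]) (wd [Di])"

definition Delta_word :: "word \<Rightarrow> 'k::field fa2" where
  "Delta_word u = foldr (\<lambda>g acc. fa2_mult (Delta_gen g) acc) u (Poly_Mapping.single ([], []) 1)"

definition Delta :: "'k::field fa \<Rightarrow> 'k fa2" where
  "Delta f = (\<Sum>u\<in>Poly_Mapping.keys f. fa2_smult (Poly_Mapping.lookup f u) (Delta_word u))"

fun eps_gen :: "gen \<Rightarrow> 'k::field" where
  "eps_gen A = 1" | "eps_gen B = 0" | "eps_gen C = 0" | "eps_gen D = 1"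
| "eps_gen Dl = 1" | "eps_gen Di = 1"

definition eps :: "'k::field fa \<Rightarrow> 'k" where
  "eps f = (\<Sum>u\<in>Poly_Mapping.keys f. Poly_Mapping.lookup f u * (\<Prod>g\<leftarrow>u. eps_gen g))"

text \<open>In O_nc(B) (and in O(T)) the images of a and d are invertible with
  a^-1 = delta^-1 d and d^-1 = delta^-1 a; these words represent a^i and d^j for i,j in Z.\<close>
definition pow_a :: "int \<Rightarrow> 'k::field fa" where
  "pow_a i = (if 0 \<le> i then wd (replicate (nat i) A) else wd (concat (replicate (nat (- i)) [Di, D])))"

definition pow_d :: "int \<Rightarrow> 'k::field fa" where
  "pow_d j = (if 0 \<le> j then wd (replicate (nat j) D) else wd (concat (replicate (nat (- j)) [Di, A])))"

definition mon :: "int \<Rightarrow> int \<Rightarrow> 'k::field fa" where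
  "mon i j = fa_mult (pow_a i) (pow_d j)"

text \<open>A left O_nc(B)-comodule structure on W = k^n with standard basis e_0..e_(n-1) is
  given by a matrix X of elements of O_nc(B) (represented modulo J_B) via
  rho(e_j) = \<Sum>_i X i j (x) e_i.  Coassociativity (Delta (x) id) rho = (id (x) rho) rho
  reads Delta(X i j) = \<Sum>_k X k j (x) X i k, and counitality reads eps(X i j) = [i = j].\<close>
definition is_OB_comodule :: "nat \<Rightarrow> (nat \<Rightarrow> nat \<Rightarrow> 'k::field fa) \<Rightarrow> bool" where
  "is_OB_comodule n X \<longleftrightarrow>
     (\<forall>i<n. \<forall>j<n. Delta (X i j) - (\<Sum>k<n. tens (X k j) (X i k)) \<in> tens_ideal J_B) \<and>
     (\<forall>i<n. \<forall>j<n. eps (X i j) = (if i = j then 1 else 0))"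

text \<open>Weight space W_s for the induced O(T)-coaction: w = \<Sum>_j w_j e_j with
  rho_T(w) = s (x) w, i.e. \<Sum>_j w_j X i j = s w_i in O(T) for every i.\<close>
definition in_weight_space :: "nat \<Rightarrow> (nat \<Rightarrow> nat \<Rightarrow> 'k::field fa) \<Rightarrow> 'k fa \<Rightarrow> (nat \<Rightarrow> 'k) \<Rightarrow> bool" where
  "in_weight_space n X s w \<longleftrightarrow>
     (\<forall>i<n. (\<Sum>j<n. fa_smult (w j) (X i j)) - fa_smult (w i) s \<in> J_T)"

definition is_weight :: "nat \<Rightarrow> (nat \<Rightarrow> nat \<Rightarrow> 'k::field fa) \<Rightarrow> 'k fa \<Rightarrow> bool" where
  "is_weight n X s \<longleftrightarrow> (\<exists>w. (\<exists>j<n. w j \<noteq> 0) \<and> in_weight_space n X s w)"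

end

theory Submission
  imports Defs
begin


abbreviation sg :: "'a \<Rightarrow> 'b::zero \<Rightarrow> 'a \<Rightarrow>\<^sub>0 'b" where "sg \<equiv> Poly_Mapping.single"
abbreviation lk where "lk \<equiv> Poly_Mapping.lookup"
abbreviation ks where "ks \<equiv> Poly_Mapping.keys"

definition pm_smult :: "'k::field \<Rightarrow> ('a \<Rightarrow>\<^sub>0 'k) \<Rightarrow> ('a \<Rightarrow>\<^sub>0 'k)" where
  "pm_smult c f = (\<Sum>u\<in>ks f. sg u (c * lk f u))"

lemma lookup_smult [simp]: "lk (pm_smult c f) u = c * lk f u"
proof -
  have "lk (pm_smult c f) u = (\<Sum>w\<in>ks f. (if u = w then c * lk f w else 0))"
    unfolding pm_smult_def lookup_sum lookup_single when_def by (intro sum.cong) auto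
  also have "\<dots> = c * lk f u"
    by (simp add: sum.delta in_keys_iff)
  finally show ?thesis .
qed

lemma pm_eq: "(\<And>u. lk f u = lk g u) \<Longrightarrow> f = g"
  by (rule poly_mapping_eqI)

lemma smult_add_r: "pm_smult c (f + g) = pm_smult c f + pm_smult c g"
  by (rule pm_eq) (simp add: lookup_add algebra_simps)
lemma smult_add_l: "pm_smult (c + d) f = pm_smult c f + pm_smult d f"
  by (rule pm_eq) (simp add: lookup_add algebra_simps)
lemma smult_zero_l [simp]: "pm_smult 0 f = 0"
  by (rule pm_eq) simp
lemma smult_zero_r [simp]: "pm_smult c 0 = 0"
  by (rule pm_eq) simp
lemma smult_one [simp]: "pm_smult 1 f = f"
  by (rule pm_eq) simp
lemma smult_smult [simp]: "pm_smult c (pm_smult d f) = pm_smult (c * d) f"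
  by (rule pm_eq) simp
lemma smult_single [simp]: "pm_smult c (sg u d) = sg u (c * d)"
  by (rule pm_eq) (simp add: lookup_single when_def)
lemma smult_minus_r: "pm_smult c (f - g) = pm_smult c f - pm_smult c g"
  by (rule pm_eq) (simp add: lookup_minus algebra_simps)
lemma smult_uminus_r: "pm_smult c (- g) = - pm_smult c g"
  by (rule pm_eq) (simp)
lemma smult_sum_r: "pm_smult c (\<Sum>i\<in>I. f i) = (\<Sum>i\<in>I. pm_smult c (f i))"
  by (rule pm_eq) (simp add: lookup_sum sum_distrib_left)
lemma smult_sum_l: "pm_smult (\<Sum>i\<in>I. c i) f = (\<Sum>i\<in>I. pm_smult (c i) f)"
  by (rule pm_eq) (simp add: lookup_sum sum_distrib_right)
lemma keys_smult: "ks (pm_smult c f) \<subseteq> ks f"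
  by (auto simp: in_keys_iff)

lemma decomp: "f = (\<Sum>u\<in>ks f. sg u (lk f u))"
proof (rule pm_eq)
  fix u
  have "lk (\<Sum>u\<in>ks f. sg u (lk f u)) u = (\<Sum>w\<in>ks f. (if u = w then lk f w else 0))"
    unfolding lookup_sum lookup_single when_def by (intro sum.cong) auto
  also have "\<dots> = lk f u" by (simp add: sum.delta in_keys_iff)
  finally show "lk f u = lk (\<Sum>u\<in>ks f. sg u (lk f u)) u" by simp
qed

definition lin :: "('a \<Rightarrow> ('b \<Rightarrow>\<^sub>0 'k::field)) \<Rightarrow> ('a \<Rightarrow>\<^sub>0 'k) \<Rightarrow> ('b \<Rightarrow>\<^sub>0 'k)" where
  "lin \<phi> f = (\<Sum>u\<in>ks f. pm_smult (lk f u) (\<phi> u))"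

definition lf :: "('a \<Rightarrow> 'k::field) \<Rightarrow> ('a \<Rightarrow>\<^sub>0 'k) \<Rightarrow> 'k" where
  "lf \<phi> f = (\<Sum>u\<in>ks f. lk f u * \<phi> u)"

lemma lin_super: "finite S \<Longrightarrow> ks f \<subseteq> S \<Longrightarrow> lin \<phi> f = (\<Sum>u\<in>S. pm_smult (lk f u) (\<phi> u))"
  unfolding lin_def by (rule sum.mono_neutral_left) (auto simp: in_keys_iff)
lemma lf_super: "finite S \<Longrightarrow> ks f \<subseteq> S \<Longrightarrow> lf \<phi> f = (\<Sum>u\<in>S. lk f u * \<phi> u)"
  unfolding lf_def by (rule sum.mono_neutral_left) (auto simp: in_keys_iff)

lemma lin_add [simp]: "lin \<phi> (f + g) = lin \<phi> f + lin \<phi> g"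
proof -
  let ?S = "ks f \<union> ks g"
  have k: "ks (f+g) \<subseteq> ?S" by (rule keys_add)
  show ?thesis
    by (subst (1 2 3) lin_super[where S="?S"]) (use k in \<open>auto simp: lookup_add smult_add_l sum.distrib\<close>)
qed
lemma lf_add [simp]: "lf \<phi> (f + g) = lf \<phi> f + lf \<phi> g"
proof -
  let ?S = "ks f \<union> ks g"
  have k: "ks (f+g) \<subseteq> ?S" by (rule keys_add)
  show ?thesis
    by (subst (1 2 3) lf_super[where S="?S"]) (use k in \<open>auto simp: lookup_add algebra_simps sum.distrib\<close>)
qed
lemma lin_zero [simp]: "lin \<phi> 0 = 0" by (simp add: lin_def)
lemma lf_zero [simp]: "lf \<phi> 0 = 0" by (simp add: lf_def)
lemma lin_single [simp]: "lin \<phi> (sg u c) = pm_smult c (\<phi> u)" by (simp add: lin_def)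
lemma lf_single [simp]: "lf \<phi> (sg u c) = c * \<phi> u" by (simp add: lf_def)
lemma lin_smult [simp]: "lin \<phi> (pm_smult c f) = pm_smult c (lin \<phi> f)"
  by (subst lin_super[where S="ks f"]) (auto simp: keys_smult lin_def smult_sum_r)
lemma lf_smult [simp]: "lf \<phi> (pm_smult c f) = c * lf \<phi> f"
  by (subst lf_super[where S="ks f"]) (auto simp: keys_smult lf_def sum_distrib_left mult.assoc)
lemma lin_uminus [simp]: "lin \<phi> (- f) = - lin \<phi> f"
  using lin_add[of \<phi> f "-f"] by (metis add.right_neutral add_diff_cancel_left' lin_zero right_minus)
lemma lf_uminus [simp]: "lf \<phi> (- f) = - lf \<phi> f"
  using lf_add[of \<phi> f "-f"] by (metis add.right_neutral add_diff_cancel_left' lf_zero right_minus)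
lemma lin_diff [simp]: "lin \<phi> (f - g) = lin \<phi> f - lin \<phi> g"
  using lin_add[of \<phi> f "-g"] by simp
lemma lf_diff [simp]: "lf \<phi> (f - g) = lf \<phi> f - lf \<phi> g"
  using lf_add[of \<phi> f "-g"] by simp
lemma lin_sum [simp]: "lin \<phi> (\<Sum>i\<in>I. f i) = (\<Sum>i\<in>I. lin \<phi> (f i))"
  by (induction I rule: infinite_finite_induct) auto
lemma lf_sum [simp]: "lf \<phi> (\<Sum>i\<in>I. f i) = (\<Sum>i\<in>I. lf \<phi> (f i))"
  by (induction I rule: infinite_finite_induct) auto
lemma lin_cong: "(\<And>u. u \<in> ks f \<Longrightarrow> \<phi> u = \<psi> u) \<Longrightarrow> lin \<phi> f = lin \<psi> f"
  unfolding lin_def by simp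
lemma lf_cong: "(\<And>u. u \<in> ks f \<Longrightarrow> \<phi> u = \<psi> u) \<Longrightarrow> lf \<phi> f = lf \<psi> f"
  unfolding lf_def by simp
lemma lin_fadd: "lin (\<lambda>u. \<phi> u + \<psi> u) f = lin \<phi> f + lin \<psi> f"
  unfolding lin_def by (simp add: smult_add_r sum.distrib)
lemma lin_fdiff: "lin (\<lambda>u. \<phi> u - \<psi> u) f = lin \<phi> f - lin \<psi> f"
  unfolding lin_def by (simp add: smult_minus_r sum_subtractf)
lemma lin_fsmult: "lin (\<lambda>u. pm_smult c (\<phi> u)) f = pm_smult c (lin \<phi> f)"
  unfolding lin_def by (simp add: smult_sum_r mult.commute)
lemma lin_fzero [simp]: "lin (\<lambda>u. 0) f = 0"
  unfolding lin_def by simp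
lemma lin_fsum: "lin (\<lambda>u. \<Sum>i\<in>I. \<phi> i u) f = (\<Sum>i\<in>I. lin (\<phi> i) f)"
  unfolding lin_def by (simp add: smult_sum_r sum.swap[of _ I])
lemma lf_fsum: "lf (\<lambda>u. \<Sum>i\<in>I. \<phi> i u) f = (\<Sum>i\<in>I. lf (\<phi> i) f)"
  unfolding lf_def by (simp add: sum_distrib_left sum.swap[of _ I])
lemma lin_comp: "lin \<psi> (lin \<phi> f) = lin (\<lambda>u. lin \<psi> (\<phi> u)) f"
  by (simp add: lin_def[of \<phi>]) (simp add: lin_def[of "\<lambda>u. lin \<psi> (\<phi> u)"])
lemma lf_comp: "lf \<psi> (lin \<phi> f) = lf (\<lambda>u. lf \<psi> (\<phi> u)) f"
  by (simp add: lin_def[of \<phi>]) (simp add: lf_def[of "\<lambda>u. lf \<psi> (\<phi> u)"])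
lemma lin_id: "lin (\<lambda>u. sg u 1) f = f"
  unfolding lin_def by (subst (3) decomp) simp
lemma lin_const: "lin (\<lambda>u. pm_smult (\<phi> u) y) f = pm_smult (lf \<phi> f) y"
  unfolding lin_def lf_def by (simp add: smult_sum_l)



lemma wd_eq: "wd u = sg u 1" by (simp add: wd_def)
lemma fa_smult_eq: "fa_smult = pm_smult" by (simp add: fun_eq_iff fa_smult_def pm_smult_def)
lemma fa2_smult_eq: "fa2_smult = pm_smult" by (simp add: fun_eq_iff fa2_smult_def pm_smult_def)

lemma fa_mult_eq: "fa_mult f g = lin (\<lambda>u. lin (\<lambda>v. wd (u@v)) g) f"
  unfolding fa_mult_def lin_def wd_eq by (simp add: smult_sum_r)
lemma tens_eq: "tens f g = lin (\<lambda>u. lin (\<lambda>v. sg (u,v) 1) g) f"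
  unfolding tens_def lin_def by (simp add: smult_sum_r)
lemma fa2_mult_eq: "fa2_mult f g = lin (\<lambda>p. lin (\<lambda>q. sg (fst p @ fst q, snd p @ snd q) 1) g) f"
  unfolding fa2_mult_def lin_def by (simp add: smult_sum_r)
lemma Delta_eq: "Delta f = lin Delta_word f"
  unfolding Delta_def lin_def fa2_smult_eq ..
lemma eps_eq: "eps f = lf (\<lambda>u. prod_list (map eps_gen u)) f"
  unfolding eps_def lf_def ..
lemma Delta_word_Cons: "Delta_word (g#w) = fa2_mult (Delta_gen g) (Delta_word w)"
  by (simp add: Delta_word_def)

lemma mult_wd: "fa_mult (wd u) (wd v) = wd (u@v)"
  by (simp add: fa_mult_eq wd_eq)
lemma tens_wd: "tens (wd u) (wd v) = sg (u,v) 1"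
  by (simp add: tens_eq wd_eq)
lemma fa2_mult_single: "fa2_mult (sg (x,y) 1) H = lin (\<lambda>b. sg (x @ fst b, y @ snd b) 1) H"
  by (simp add: fa2_mult_eq)
lemma fa2_mult_add: "fa2_mult (F1 + F2) H = fa2_mult F1 H + fa2_mult F2 H"
  by (simp add: fa2_mult_eq)
lemma tens_sg: "tens x y = lin (\<lambda>u. lin (\<lambda>v. sg (u,v) 1) y) x" by (rule tens_eq)

lemma SH: "fa_mult (fa_smult c (wd u)) (fa_mult x (wd v)) = lin (\<lambda>w. sg (u@w@v) c) x"
proof -
  have 1: "fa_mult x (wd v) = lin (\<lambda>w. wd (w@v)) x"
    by (simp add: fa_mult_eq wd_eq)
  have 2: "fa_smult c (wd u) = sg u c" by (simp add: fa_smult_eq wd_eq)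
  have "fa_mult (sg u c) (lin (\<lambda>w. wd (w@v)) x) = pm_smult c (lin (\<lambda>w. wd (u@w@v)) x)"
    by (simp add: fa_mult_eq lin_comp wd_eq)
  also have "\<dots> = lin (\<lambda>w. sg (u@w@v) c) x"
    by (simp add: lin_fsmult[symmetric] wd_eq)
  finally show ?thesis using 1 2 by simp
qed

context fixes R :: "'k::field fa set" begin

abbreviation "I \<equiv> two_sided_ideal R"

lemma I_mult: "x \<in> I \<Longrightarrow> lin (\<lambda>w. sg (u@w@v) c) x \<in> I"
  using two_sided_ideal.mult[of x R c u v] by (simp add: SH)
lemma I_smult: "x \<in> I \<Longrightarrow> pm_smult c x \<in> I"
proof -
  assume "x \<in> I"
  from I_mult[OF this, of "[]" "[]" c]
  have "lin (\<lambda>w. pm_smult c (sg w 1)) x \<in> I" by simp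
  then show ?thesis by (simp only: lin_fsmult lin_id)
qed
lemma I_add: "x \<in> I \<Longrightarrow> y \<in> I \<Longrightarrow> x + y \<in> I" by (rule two_sided_ideal.add)
lemma I_zero: "0 \<in> I" by (rule two_sided_ideal.zero)
lemma I_gen: "r \<in> R \<Longrightarrow> r \<in> I" by (rule two_sided_ideal.gen)
lemma I_uminus: "x \<in> I \<Longrightarrow> - x \<in> I"
proof -
  assume "x \<in> I"
  have "pm_smult (-1) x = - x" by (rule pm_eq) simp
  with I_smult[OF \<open>x \<in> I\<close>, of "-1"] show ?thesis by simp
qed
lemma I_diff: "x \<in> I \<Longrightarrow> y \<in> I \<Longrightarrow> x - y \<in> I"
  using I_add[of x "-y"] I_uminus[of y] by simp
lemma I_sum: "(\<And>i. i \<in> S \<Longrightarrow> f i \<in> I) \<Longrightarrow> (\<Sum>i\<in>S. f i) \<in> I"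
  by (induction S rule: infinite_finite_induct) (auto intro: I_add I_zero)
lemma I_lin: "(\<And>u. u \<in> ks x \<Longrightarrow> \<phi> u \<in> I) \<Longrightarrow> lin \<phi> x \<in> I"
  unfolding lin_def by (intro I_sum I_smult) auto
lemma I_wcong: "wd a - wd b \<in> I \<Longrightarrow> wd (u@a@v) - wd (u@b@v) \<in> I"
  using I_mult[of "wd a - wd b" u v 1] by (simp add: wd_eq)
lemma I_word: "wd a \<in> I \<Longrightarrow> wd (u@a@v) \<in> I"
  using I_mult[of "wd a" u v 1] by (simp add: wd_eq)

end



fun la :: "gen \<Rightarrow> int" where "la A = 1" | "la B = 1" | "la C = 0" | "la D = 0" | "la Dl = 1" | "la Di = -1"
fun ld :: "gen \<Rightarrow> int" where "ld A = 0" | "ld B = 0" | "ld C = 1" | "ld D = 1" | "ld Dl = 1" | "ld Di = -1"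
fun ra :: "gen \<Rightarrow> int" where "ra A = 1" | "ra B = 0" | "ra C = 1" | "ra D = 0" | "ra Dl = 1" | "ra Di = -1"
fun rd :: "gen \<Rightarrow> int" where "rd A = 0" | "rd B = 1" | "rd C = 0" | "rd D = 1" | "rd Dl = 1" | "rd Di = -1"

definition "La w = sum_list (map la w)"
definition "Ld w = sum_list (map ld w)"
definition "Ra w = sum_list (map ra w)"
definition "Rd w = sum_list (map rd w)"
definition "nobc w \<longleftrightarrow> B \<notin> set w \<and> C \<notin> set w"

lemma wt_simps [simp]:
  "La [] = 0" "Ld [] = 0" "Ra [] = 0" "Rd [] = 0"
  "La (g#w) = la g + La w" "Ld (g#w) = ld g + Ld w" "Ra (g#w) = ra g + Ra w" "Rd (g#w) = rd g + Rd w"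
  "La (u@w) = La u + La w" "Ld (u@w) = Ld u + Ld w" "Ra (u@w) = Ra u + Ra w" "Rd (u@w) = Rd u + Rd w"
  by (simp_all add: La_def Ld_def Ra_def Rd_def)

lemma nobc_simps [simp]: "nobc []" "nobc (g#w) \<longleftrightarrow> g \<noteq> B \<and> g \<noteq> C \<and> nobc w"
  "nobc (u@w) \<longleftrightarrow> nobc u \<and> nobc w"
  by (auto simp: nobc_def)

lemma lf_fmult: "lf (\<lambda>u. c * \<phi> u) f = c * lf \<phi> f"
  unfolding lf_def by (simp add: sum_distrib_left mult.left_commute)

lemma lf_ideal:
  assumes "x \<in> two_sided_ideal R"
  shows "(\<forall>u v. \<forall>r\<in>R. lf (\<lambda>w. \<psi> (u@w@v)) r = 0) \<longrightarrow> lf \<psi> x = 0"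
  using assms
proof (induction arbitrary: \<psi>)
  case (gen r) show ?case
  proof
    assume h: "\<forall>u v. \<forall>r\<in>R. lf (\<lambda>w. \<psi> (u@w@v)) r = 0"
    from h[rule_format, of r "[]" "[]"] gen show "lf \<psi> r = 0" by simp
  qed
next
  case zero then show ?case by simp
next
  case (add x y) then show ?case by simp
next
  case (mult x c u v)
  show ?case
  proof
    assume h: "\<forall>u v. \<forall>r\<in>R. lf (\<lambda>w. \<psi> (u@w@v)) r = 0"
    have "\<forall>u' v'. \<forall>r\<in>R. lf (\<lambda>w. \<psi> (u@(u'@w@v')@v)) r = 0"
    proof (intro allI ballI)
      fix u' v' r assume "r \<in> R"
      with h[rule_format, of r "u@u'" "v'@v"] show "lf (\<lambda>w. \<psi> (u@(u'@w@v')@v)) r = 0" by simp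
    qed
    then have "lf (\<lambda>w. \<psi> (u@w@v)) x = 0" using mult.IH[of "\<lambda>w. \<psi> (u@w@v)"] by simp
    then show "lf \<psi> (fa_mult (fa_smult c (wd u)) (fa_mult x (wd v))) = 0"
      by (simp add: SH lf_comp lf_fmult)
  qed
qed

lemma lin_ideal:
  assumes "x \<in> two_sided_ideal R"
  shows "(\<forall>u v. \<forall>r\<in>R. lin (\<lambda>w. if \<phi> (u@w@v) then wd w else 0) r \<in> two_sided_ideal R) \<longrightarrow>
     lin (\<lambda>w. if \<phi> w then wd w else 0) x \<in> two_sided_ideal R"
  using assms
proof (induction arbitrary: \<phi>)
  case (gen r) show ?case
  proof
    assume h: "\<forall>u v. \<forall>r\<in>R. lin (\<lambda>w. if \<phi> (u@w@v) then wd w else 0) r \<in> two_sided_ideal R"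
    from h[rule_format, of r "[]" "[]"] gen show "lin (\<lambda>w. if \<phi> w then wd w else 0) r \<in> two_sided_ideal R" by simp
  qed
next
  case zero then show ?case by (simp add: I_zero)
next
  case (add x y) then show ?case by (simp add: I_add)
next
  case (mult x c u v)
  show ?case
  proof
    assume h: "\<forall>u v. \<forall>r\<in>R. lin (\<lambda>w. if \<phi> (u@w@v) then wd w else 0) r \<in> two_sided_ideal R"
    have "\<forall>u' v'. \<forall>r\<in>R. lin (\<lambda>w. if \<phi> (u@(u'@w@v')@v) then wd w else 0) r \<in> two_sided_ideal R"
    proof (intro allI ballI)
      fix u' v' r assume "r \<in> R"
      with h[rule_format, of r "u@u'" "v'@v"] show "lin (\<lambda>w. if \<phi> (u@(u'@w@v')@v) then wd w else 0) r \<in> two_sided_ideal R" by simp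
    qed
    then have "lin (\<lambda>w. if \<phi> (u@w@v) then wd w else 0) x \<in> two_sided_ideal R"
      using mult.IH[of "\<lambda>w. \<phi> (u@w@v)"] by simp
    from I_mult[OF this, of u v c]
    have "lin (\<lambda>w'. sg (u@w'@v) c) (lin (\<lambda>w. if \<phi> (u@w@v) then wd w else 0) x) \<in> two_sided_ideal R" .
    moreover have "lin (\<lambda>w'. sg (u@w'@v) c) (lin (\<lambda>w. if \<phi> (u@w@v) then wd w else 0) x) =
       lin (\<lambda>w. if \<phi> w then wd w else 0) (lin (\<lambda>w. sg (u@w@v) c) x)"
      unfolding lin_comp by (rule lin_cong) (simp add: wd_eq)
    ultimately show "lin (\<lambda>w. if \<phi> w then wd w else 0) (fa_mult (fa_smult c (wd u)) (fa_mult x (wd v))) \<in> two_sided_ideal R"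
      by (simp add: SH)
  qed
qed

definition th :: "int \<Rightarrow> int \<Rightarrow> 'k::field fa \<Rightarrow> 'k" where
  "th p q = lf (\<lambda>w. if nobc w \<and> La w = p \<and> Ld w = q then 1 else 0)"

lemma th_JT: "x \<in> J_T \<Longrightarrow> th p q x = 0"
  unfolding th_def J_T_def
  apply (rule lf_ideal[rule_format], assumption)
  apply (auto simp: rels_GL2_def wd_eq)
  done



lemma JB_JT: "x \<in> J_B \<Longrightarrow> x \<in> J_T"
  unfolding J_B_def J_T_def
  by (induction rule: two_sided_ideal.induct) (auto intro: two_sided_ideal.intros)

definition PL :: "int \<Rightarrow> int \<Rightarrow> 'k::field fa \<Rightarrow> 'k fa" where
  "PL p q = lin (\<lambda>w. if La w = p \<and> Ld w = q then wd w else 0)"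
definition PR :: "int \<Rightarrow> int \<Rightarrow> 'k::field fa \<Rightarrow> 'k fa" where
  "PR p q = lin (\<lambda>w. if Ra w = p \<and> Rd w = q then wd w else 0)"

lemma if_same_diff: "(if P then a else 0) - (if P then b else (0::'a::ab_group_add)) = (if P then a - b else 0)"
  by simp

lemma PL_JB: "x \<in> J_B \<Longrightarrow> PL p q x \<in> J_B"
  unfolding PL_def J_B_def
  apply (rule lin_ideal[rule_format], assumption)
  apply (auto simp: rels_GL2_def wd_eq intro: I_zero I_gen)
  done



definition ev :: "'k::field itself \<Rightarrow> word \<Rightarrow> word \<Rightarrow> bool" where
  "ev K a b \<longleftrightarrow> (wd a - wd b :: 'k fa) \<in> J_B"

lemma ev_refl: "ev K a a" unfolding ev_def J_B_def by (simp add: I_zero)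
lemma ev_sym: "ev K a b \<Longrightarrow> ev K b a"
  unfolding ev_def J_B_def using I_uminus by fastforce
lemma ev_trans [trans]: "ev K a b \<Longrightarrow> ev K b c \<Longrightarrow> ev K a c"
  unfolding ev_def J_B_def using I_add by fastforce
lemma ev_cong: "ev K a b \<Longrightarrow> x1 = u@a@v \<Longrightarrow> x2 = u@b@v \<Longrightarrow> ev K x1 x2"
  unfolding ev_def J_B_def using I_wcong by blast

lemma JB_gen: "r \<in> rels_GL2 \<Longrightarrow> r \<in> J_B" unfolding J_B_def by (auto intro: I_gen)
lemma JB_B: "wd [B] \<in> J_B" unfolding J_B_def by (auto intro: I_gen)
lemma JB_word: "B \<in> set w \<Longrightarrow> wd w \<in> J_B"
proof -
  assume "B \<in> set w"
  then obtain u v where "w = u @ [B] @ v" by (metis append_Cons append_Nil split_list)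
  with JB_B show ?thesis unfolding J_B_def using I_word by blast
qed
lemma JT_word: "C \<in> set w \<Longrightarrow> wd w \<in> J_T"
proof -
  assume "C \<in> set w"
  then obtain u v where "w = u @ [C] @ v" by (metis append_Cons append_Nil split_list)
  moreover have "wd [C] \<in> J_T" unfolding J_T_def by (auto intro: I_gen)
  ultimately show ?thesis unfolding J_T_def using I_word by blast
qed

lemma ev_from3: fixes K :: "'k::field itself"
  shows "(wd a - wd b - wd c :: 'k fa) \<in> J_B \<Longrightarrow> B \<in> set b \<Longrightarrow> ev K a c"
  unfolding ev_def
proof -
  assume h: "(wd a - wd b - wd c :: 'k fa) \<in> J_B" and "B \<in> set b"
  then have "wd b \<in> (J_B :: 'k fa set)" using JB_word[OF \<open>B \<in> set b\<close>] by blast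
  with h have "(wd a - wd b - wd c) + wd b \<in> (J_B :: 'k fa set)" unfolding J_B_def by (rule two_sided_ideal.add)
  then show "(wd a - wd c :: 'k fa) \<in> J_B" by (simp add: algebra_simps)
qed

lemma R3: "ev K [A,D] [Dl]" by (rule ev_from3[of _ "[C,B]"]) (auto simp: rels_GL2_def intro: JB_gen)
lemma R4: "ev K [D,A] [Dl]" by (rule ev_from3[of _ "[B,C]"]) (auto simp: rels_GL2_def intro: JB_gen)
lemma R5: "ev K [Dl,Di] []" unfolding ev_def by (rule JB_gen) (simp add: rels_GL2_def)
lemma R6: "ev K [Di,Dl] []" unfolding ev_def by (rule JB_gen) (simp add: rels_GL2_def)
lemma R7: "ev K [A,Di,D] []" by (rule ev_from3[of _ "[B,Di,C]"]) (auto simp: rels_GL2_def intro: JB_gen)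
lemma R8: "ev K [D,Di,A] []" by (rule ev_from3[of _ "[C,Di,B]"]) (auto simp: rels_GL2_def intro: JB_gen)

lemma E1: "ev K [A,D] [D,A]" using R3 R4 ev_sym ev_trans by blast
lemma E2: "ev K [Di,D,A] []"
proof -
  have "ev K [Di,D,A] [Di,Dl]" by (rule ev_cong[OF R4, where u="[Di]" and v="[]"]) auto
  also have "ev K \<dots> []" by (rule R6)
  finally show ?thesis .
qed
lemma E3: "ev K [Di,A,D] []"
proof -
  have "ev K [Di,A,D] [Di,Dl]" by (rule ev_cong[OF R3, where u="[Di]" and v="[]"]) auto
  also have "ev K \<dots> []" by (rule R6)
  finally show ?thesis .
qed
lemma C2: "ev K [D,Di,D] [Di,D,D]"
proof -
  have "ev K [D,Di,D] [Di,D,A,D,Di,D]" by (rule ev_cong[OF ev_sym[OF E2], where u="[]" and v="[D,Di,D]"]) auto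
  also have "ev K \<dots> [Di,D,D,A,Di,D]" by (rule ev_cong[OF E1, where u="[Di,D]" and v="[Di,D]"]) auto
  also have "ev K \<dots> [Di,D,D]" by (rule ev_cong[OF R7, where u="[Di,D,D]" and v="[]"]) auto
  finally show ?thesis .
qed
lemma C3: "ev K [Di,A,A] [A,Di,A]"
proof -
  have "ev K [A,Di,A] [Di,A,D,A,Di,A]" by (rule ev_cong[OF ev_sym[OF E3], where u="[]" and v="[A,Di,A]"]) auto
  also have "ev K \<dots> [Di,A,A,D,Di,A]" by (rule ev_cong[OF ev_sym[OF E1], where u="[Di,A]" and v="[Di,A]"]) auto
  also have "ev K \<dots> [Di,A,A]" by (rule ev_cong[OF R8, where u="[Di,A,A]" and v="[]"]) auto
  finally show ?thesis by (rule ev_sym)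
qed
lemma C4: "ev K [Di,A,Di,D] [Di,D,Di,A]"
proof -
  have "ev K [Di,A,Di,D] [Di,D,A,Di,A,Di,D]" by (rule ev_cong[OF ev_sym[OF E2], where u="[]" and v="[Di,A,Di,D]"]) auto
  also have "ev K \<dots> [Di,D,Di,A,A,Di,D]" by (rule ev_cong[OF ev_sym[OF C3], where u="[Di,D]" and v="[Di,D]"]) auto
  also have "ev K \<dots> [Di,D,Di,A]" by (rule ev_cong[OF R7, where u="[Di,D,Di,A]" and v="[]"]) auto
  finally show ?thesis .
qed

definition pa :: "int \<Rightarrow> word" where
  "pa p = (if 0 \<le> p then replicate (nat p) A else concat (replicate (nat (- p)) [Di, D]))"
definition pd :: "int \<Rightarrow> word" where
  "pd q = (if 0 \<le> q then replicate (nat q) D else concat (replicate (nat (- q)) [Di, A]))"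

lemma mon_eq: "mon p q = wd (pa p @ pd q)"
  unfolding mon_def pow_a_def pow_d_def pa_def pd_def by (simp add: mult_wd)

lemma pa_pos: "0 \<le> p \<Longrightarrow> pa (p+1) = A # pa p"
  unfolding pa_def by (simp add: nat_add_distrib)
lemma pa_neg: "p < 0 \<Longrightarrow> pa p = Di # D # pa (p+1)"
proof -
  assume "p < 0"
  then have "nat (-p) = Suc (nat (- (p+1)))" by simp
  then show ?thesis using \<open>p<0\<close> unfolding pa_def by auto
qed
lemma pd_pos: "0 \<le> q \<Longrightarrow> pd (q+1) = D # pd q"
  unfolding pd_def by (simp add: nat_add_distrib)
lemma pd_neg: "q < 0 \<Longrightarrow> pd q = Di # A # pd (q+1)"
proof -
  assume "q < 0"
  then have "nat (-q) = Suc (nat (- (q+1)))" by simp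
  then show ?thesis using \<open>q<0\<close> unfolding pd_def by auto
qed

lemma DC1: "ev K (D # replicate n A) (replicate n A @ [D])"
proof (induction n)
  case 0 show ?case by (simp add: ev_refl)
next
  case (Suc n)
  have "ev K (D # replicate (Suc n) A) (A # D # replicate n A)"
    by (rule ev_cong[OF ev_sym[OF E1], where u="[]" and v="replicate n A"]) auto
  also have "ev K \<dots> (A # (replicate n A @ [D]))" by (rule ev_cong[OF Suc.IH, where u="[A]" and v="[]"]) auto
  finally show ?case by simp
qed
lemma DC2: "ev K (D # concat (replicate n [Di,D])) (concat (replicate n [Di,D]) @ [D])"
proof (induction n)
  case 0 show ?case by (simp add: ev_refl)
next
  case (Suc n)
  have "ev K (D # concat (replicate (Suc n) [Di,D])) (Di # D # D # concat (replicate n [Di,D]))"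
    by (rule ev_cong[OF C2, where u="[]" and v="concat (replicate n [Di,D])"]) auto
  also have "ev K \<dots> (Di # D # (concat (replicate n [Di,D]) @ [D]))" by (rule ev_cong[OF Suc.IH, where u="[Di,D]" and v="[]"]) auto
  finally show ?case by simp
qed
lemma DC: "ev K (D # pa p) (pa p @ [D])"
  unfolding pa_def using DC1 DC2 by auto

lemma DAC1: "ev K (Di # A # replicate n A) (replicate n A @ [Di,A])"
proof (induction n)
  case 0 show ?case by (simp add: ev_refl)
next
  case (Suc n)
  have "ev K (Di # A # replicate (Suc n) A) (A # Di # A # replicate n A)"
    by (rule ev_cong[OF C3, where u="[]" and v="replicate n A"]) auto
  also have "ev K \<dots> (A # (replicate n A @ [Di,A]))" by (rule ev_cong[OF Suc.IH, where u="[A]" and v="[]"]) auto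
  finally show ?case by simp
qed
lemma DAC2: "ev K (Di # A # concat (replicate n [Di,D])) (concat (replicate n [Di,D]) @ [Di,A])"
proof (induction n)
  case 0 show ?case by (simp add: ev_refl)
next
  case (Suc n)
  have "ev K (Di # A # concat (replicate (Suc n) [Di,D])) (Di # D # Di # A # concat (replicate n [Di,D]))"
    by (rule ev_cong[OF C4, where u="[]" and v="concat (replicate n [Di,D])"]) auto
  also have "ev K \<dots> (Di # D # (concat (replicate n [Di,D]) @ [Di,A]))" by (rule ev_cong[OF Suc.IH, where u="[Di,D]" and v="[]"]) auto
  finally show ?case by simp
qed
lemma DAC: "ev K (Di # A # pa p) (pa p @ [Di,A])"
  unfolding pa_def using DAC1 DAC2 by auto

definition "nf p q = pa p @ pd q"

lemma NA: "ev K (A # nf p q) (nf (p+1) q)"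
proof (cases "0 \<le> p")
  case True then show ?thesis by (simp add: nf_def pa_pos ev_refl)
next
  case False
  then have "pa p = Di # D # pa (p+1)" by (simp add: pa_neg)
  then show ?thesis unfolding nf_def by (intro ev_cong[OF R7, where u="[]" and v="pa (p+1) @ pd q"]) auto
qed
lemma NDD: "ev K (Di # D # nf p q) (nf (p-1) q)"
proof (cases "p \<le> 0")
  case True then have "pa (p-1) = Di # D # pa p" using pa_neg[of "p-1"] by simp
  then show ?thesis by (simp add: nf_def ev_refl)
next
  case False
  then have "pa p = A # pa (p-1)" using pa_pos[of "p-1"] by simp
  then show ?thesis unfolding nf_def by (intro ev_cong[OF E2, where u="[]" and v="pa (p-1) @ pd q"]) auto
qed
lemma ND: "ev K (D # nf p q) (nf p (q+1))"
proof -
  have "ev K (D # nf p q) (pa p @ D # pd q)"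
    unfolding nf_def by (rule ev_cong[OF DC, where u="[]" and v="pd q"]) auto
  also have "ev K \<dots> (nf p (q+1))"
  proof (cases "0 \<le> q")
    case True then show ?thesis by (simp add: nf_def pd_pos ev_refl)
  next
    case False
    then have "pd q = Di # A # pd (q+1)" by (simp add: pd_neg)
    then show ?thesis unfolding nf_def by (intro ev_cong[OF R8, where u="pa p" and v="pd (q+1)"]) auto
  qed
  finally show ?thesis .
qed
lemma NDA: "ev K (Di # A # nf p q) (nf p (q-1))"
proof -
  have "ev K (Di # A # nf p q) (pa p @ Di # A # pd q)"
    unfolding nf_def by (rule ev_cong[OF DAC, where u="[]" and v="pd q"]) auto
  also have "ev K \<dots> (nf p (q-1))"
  proof (cases "q \<le> 0")
    case True then have "pd (q-1) = Di # A # pd q" using pd_neg[of "q-1"] by simp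
    then show ?thesis by (simp add: nf_def ev_refl)
  next
    case False
    then have "pd q = D # pd (q-1)" using pd_pos[of "q-1"] by simp
    then show ?thesis unfolding nf_def by (intro ev_cong[OF E3, where u="pa p" and v="pd (q-1)"]) auto
  qed
  finally show ?thesis .
qed
lemma NDl: "ev K (Dl # nf p q) (nf (p+1) (q+1))"
proof -
  have "ev K (Dl # nf p q) (A # D # nf p q)" by (rule ev_cong[OF ev_sym[OF R3], where u="[]" and v="nf p q"]) auto
  also have "ev K \<dots> (A # nf p (q+1))" by (rule ev_cong[OF ND, where u="[A]" and v="[]"]) auto
  also have "ev K \<dots> (nf (p+1) (q+1))" by (rule NA)
  finally show ?thesis .
qed
lemma NDi: "ev K (Di # nf p q) (nf (p-1) (q-1))"
proof -
  have "ev K (Di # nf p q) (Di # D # Di # A # nf p q)" by (rule ev_cong[OF ev_sym[OF R8], where u="[Di]" and v="nf p q"]) auto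
  also have "ev K \<dots> (Di # D # nf p (q-1))" by (rule ev_cong[OF NDA, where u="[Di,D]" and v="[]"]) auto
  also have "ev K \<dots> (nf (p-1) (q-1))" by (rule NDD)
  finally show ?thesis .
qed

lemma N: "nobc w \<Longrightarrow> ev K w (nf (La w) (Ld w))"
proof (induction w)
  case Nil show ?case by (simp add: nf_def pa_def pd_def ev_refl)
next
  case (Cons g w)
  then have nb: "nobc w" "g \<noteq> B" "g \<noteq> C" by auto
  have 1: "ev K (g # w) (g # nf (La w) (Ld w))" by (rule ev_cong[OF Cons.IH[OF nb(1)], where u="[g]" and v="[]"]) auto
  show ?case
  proof (cases g)
    case A with 1 NA[of K "La w" "Ld w"] show ?thesis by (auto simp: add.commute intro: ev_trans)
  next
    case D with 1 ND[of K "La w" "Ld w"] show ?thesis by (auto simp: add.commute intro: ev_trans)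
  next
    case Dl with 1 NDl[of K "La w" "Ld w"] show ?thesis by (auto simp: add.commute intro: ev_trans)
  next
    case Di with 1 NDi[of K "La w" "Ld w"] show ?thesis by (auto intro: ev_trans)
  qed (use nb in auto)
qed

lemma N_JB: "nobc w \<Longrightarrow> (wd w - mon (La w) (Ld w) :: 'k::field fa) \<in> J_B"
  using N[of w "TYPE('k)"] unfolding ev_def by (simp add: mon_eq nf_def)



definition TL :: "int \<Rightarrow> int \<Rightarrow> 'k::field fa2 \<Rightarrow> 'k fa" where
  "TL p q = lin (\<lambda>b. if nobc (fst b) \<and> La (fst b) = p \<and> Ld (fst b) = q then wd (snd b) else 0)"
definition TR :: "int \<Rightarrow> int \<Rightarrow> 'k::field fa2 \<Rightarrow> 'k fa" where
  "TR p q = lin (\<lambda>b. if nobc (snd b) \<and> La (snd b) = p \<and> Ld (snd b) = q then wd (fst b) else 0)"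

lemma TL_add [simp]: "TL p q (a + b) = TL p q a + TL p q b" by (simp add: TL_def)
lemma TR_add [simp]: "TR p q (a + b) = TR p q a + TR p q b" by (simp add: TR_def)

lemma lin_wd: "lin wd y = y"
  unfolding wd_def[abs_def] by (rule lin_id)
lemma lin_sgc: "lin (\<lambda>u. sg u c) x = pm_smult c x"
proof -
  have "lin (\<lambda>u. sg u c) x = lin (\<lambda>u. pm_smult c (sg u 1)) x" by simp
  then show ?thesis by (simp only: lin_fsmult lin_id)
qed
lemma tens_sg1 [simp]: "tens (sg u 1) (sg v 1) = sg (u,v) 1" using tens_wd by (simp add: wd_eq)
lemma TL_zero [simp]: "TL p q 0 = 0" by (simp add: TL_def)
lemma TR_zero [simp]: "TR p q 0 = 0" by (simp add: TR_def)

lemma lin_ifwd: "lin (\<lambda>v. if P then wd v else 0) y = (if P then y else 0)"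
  by (cases P) (simp_all add: wd_eq lin_id)

lemma TL_tens: "TL p q (tens x y) = pm_smult (th p q x) y"
proof -
  have "TL p q (tens x y) = lin (\<lambda>u. pm_smult (if nobc u \<and> La u = p \<and> Ld u = q then 1 else 0) y) x"
    unfolding TL_def tens_eq lin_comp by (rule lin_cong) (auto simp: lin_ifwd lin_wd)
  then show ?thesis by (simp add: lin_const th_def)
qed

lemma TR_tens: "TR p q (tens x y) = pm_smult (th p q y) x"
proof -
  have "TR p q (tens x y) = lin (\<lambda>u. pm_smult (th p q y) (wd u)) x"
    unfolding TR_def tens_eq lin_comp th_def
    by (rule lin_cong) (simp add: lin_const[symmetric], rule lin_cong, simp)
  then show ?thesis by (simp add: wd_eq lin_sgc)
qed

lemma th_JB: "x \<in> J_B \<Longrightarrow> th p q x = 0" using th_JT JB_JT by blast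

lemma JB_smult: "x \<in> J_B \<Longrightarrow> pm_smult c x \<in> J_B" unfolding J_B_def by (rule I_smult)
lemma JB_add: "x \<in> J_B \<Longrightarrow> y \<in> J_B \<Longrightarrow> x + y \<in> J_B" unfolding J_B_def by (rule I_add)
lemma JB_diff: "x \<in> J_B \<Longrightarrow> y \<in> J_B \<Longrightarrow> x - y \<in> J_B" unfolding J_B_def by (rule I_diff)
lemma JB_zero: "0 \<in> J_B" unfolding J_B_def by (rule I_zero)
lemma JT_smult: "x \<in> J_T \<Longrightarrow> pm_smult c x \<in> J_T" unfolding J_T_def by (rule I_smult)
lemma JT_add: "x \<in> J_T \<Longrightarrow> y \<in> J_T \<Longrightarrow> x + y \<in> J_T" unfolding J_T_def by (rule I_add)
lemma JT_diff: "x \<in> J_T \<Longrightarrow> y \<in> J_T \<Longrightarrow> x - y \<in> J_T" unfolding J_T_def by (rule I_diff)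
lemma JT_zero: "0 \<in> J_T" unfolding J_T_def by (rule I_zero)

lemma TL_JB: "z \<in> tens_ideal J_B \<Longrightarrow> TL p q z \<in> J_B"
  by (induction rule: tens_ideal.induct)
     (auto simp: TL_tens th_JB JB_smult JB_add JB_zero intro: JB_zero)
lemma TR_JB: "z \<in> tens_ideal J_B \<Longrightarrow> TR p q z \<in> J_B"
  by (induction rule: tens_ideal.induct)
     (auto simp: TR_tens th_JB JB_smult JB_add JB_zero intro: JB_zero)

lemma TL_step: "TL p q (fa2_mult (sg (x,y) 1) H) =
   (if nobc x then lin (\<lambda>v. wd (y@v)) (TL (p - La x) (q - Ld x) H) else 0)"
  unfolding TL_def fa2_mult_single lin_comp
  by (cases "nobc x"; simp; rule lin_cong; auto simp: wd_eq)

lemma TR_step: "TR p q (fa2_mult (sg (x,y) 1) H) =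
   (if nobc y then lin (\<lambda>v. wd (x@v)) (TR (p - La y) (q - Ld y) H) else 0)"
  unfolding TR_def fa2_mult_single lin_comp
  by (cases "nobc y"; simp; rule lin_cong; auto simp: wd_eq)

lemma Delta_gen_eqs:
  "Delta_gen A = sg ([A],[A]) 1 + sg ([B],[C]) 1"
  "Delta_gen B = sg ([A],[B]) 1 + sg ([B],[D]) 1"
  "Delta_gen C = sg ([C],[A]) 1 + sg ([D],[C]) 1"
  "Delta_gen D = sg ([C],[B]) 1 + sg ([D],[D]) 1"
  "Delta_gen Dl = sg ([Dl],[Dl]) 1"
  "Delta_gen Di = sg ([Di],[Di]) 1"
  by (simp_all add: tens_wd)

lemma lin_shift_if: "lin (\<lambda>v. wd (x@v)) (if P then wd w else 0) = (if P then wd (x@w) else 0)"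
  by (simp add: wd_eq)

lemma TL_Dw: "TL p q (Delta_word w) = (if La w = p \<and> Ld w = q then wd w else 0)"
proof (induction w arbitrary: p q)
  case Nil show ?case by (simp add: Delta_word_def TL_def wd_eq)
next
  case (Cons g w)
  show ?case
    by (cases g; simp only: Delta_word_Cons Delta_gen_eqs fa2_mult_add TL_add TL_step Cons.IH lin_shift_if;
        simp; auto)
qed

lemma TR_Dw: "TR p q (Delta_word w) = (if Ra w = p \<and> Rd w = q then wd w else 0)"
proof (induction w arbitrary: p q)
  case Nil show ?case by (simp add: Delta_word_def TR_def wd_eq)
next
  case (Cons g w)
  show ?case
    by (cases g; simp only: Delta_word_Cons Delta_gen_eqs fa2_mult_add TR_add TR_step Cons.IH lin_shift_if;
        simp; auto)
qed

lemma TL_lin: "TL p q (lin \<phi> x) = lin (\<lambda>u. TL p q (\<phi> u)) x"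
  unfolding TL_def by (rule lin_comp)
lemma TR_lin: "TR p q (lin \<phi> x) = lin (\<lambda>u. TR p q (\<phi> u)) x"
  unfolding TR_def by (rule lin_comp)
lemma TL_Delta: "TL p q (Delta x) = PL p q x"
  unfolding Delta_eq PL_def TL_lin TL_Dw ..
lemma TR_Delta: "TR p q (Delta x) = PR p q x"
  unfolding Delta_eq PR_def TR_lin TR_Dw ..



lemma TL_diff [simp]: "TL p q (a - b) = TL p q a - TL p q b" by (simp add: TL_def)
lemma TR_diff [simp]: "TR p q (a - b) = TR p q a - TR p q b" by (simp add: TR_def)
lemma TL_sum [simp]: "TL p q (\<Sum>k\<in>S. f k) = (\<Sum>k\<in>S. TL p q (f k))" by (simp add: TL_def)
lemma TR_sum [simp]: "TR p q (\<Sum>k\<in>S. f k) = (\<Sum>k\<in>S. TR p q (f k))" by (simp add: TR_def)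
lemma th_diff [simp]: "th p q (a - b) = th p q a - th p q b" by (simp add: th_def)
lemma th_add [simp]: "th p q (a + b) = th p q a + th p q b" by (simp add: th_def)
lemma th_sum [simp]: "th p q (\<Sum>k\<in>S. f k) = (\<Sum>k\<in>S. th p q (f k))" by (simp add: th_def)
lemma th_smult [simp]: "th p q (pm_smult c a) = c * th p q a" by (simp add: th_def)
lemma PL_diff [simp]: "PL p q (a - b) = PL p q a - PL p q b" by (simp add: PL_def)

lemma lf_fzero: "lf (\<lambda>u. 0) f = 0" by (simp add: lf_def)

lemma th_PL: "th a b (PL p q x) = (if a = p \<and> b = q then th p q x else 0)"
proof (cases "a = p \<and> b = q")
  case True then show ?thesis
    unfolding th_def PL_def lf_comp by (simp, intro lf_cong) (simp add: wd_eq)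
next
  case False
  have "th a b (PL p q x) = lf (\<lambda>u. 0) x"
    unfolding th_def PL_def lf_comp by (intro lf_cong) (use False in \<open>auto simp: wd_eq\<close>)
  then show ?thesis by (subst if_not_P[OF False]) (simp add: lf_fzero)
qed

lemma La_rep [simp]: "La (replicate n g) = int n * la g" "Ld (replicate n g) = int n * ld g"
  by (induction n) (auto simp: algebra_simps)
lemma La_crep [simp]: "La (concat (replicate n w)) = int n * La w" "Ld (concat (replicate n w)) = int n * Ld w"
  by (induction n) (auto simp: algebra_simps)
lemma nobc_rep: "nobc w \<Longrightarrow> nobc (concat (replicate n w))" "g \<noteq> B \<Longrightarrow> g \<noteq> C \<Longrightarrow> nobc (replicate n g)"
  by (induction n) auto

lemma wt_pa: "La (pa p) = p" "Ld (pa p) = 0" "nobc (pa p)"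
  unfolding pa_def by (auto intro: nobc_rep)
lemma wt_pd: "La (pd q) = 0" "Ld (pd q) = q" "nobc (pd q)"
  unfolding pd_def by (auto intro: nobc_rep)

lemma th_mon: "th p q (mon p' q') = (if p = p' \<and> q = q' then 1 else 0)"
  by (simp add: th_def mon_eq wd_eq wt_pa wt_pd)

lemma eps_word: "prod_list (map eps_gen u) = (if nobc u then (1::'k::field) else 0)"
proof (induction u)
  case (Cons g u) then show ?case by (cases g) auto
qed simp

lemma nobc_R: "nobc u \<Longrightarrow> Ra u = La u \<and> Rd u = Ld u"
proof (induction u)
  case (Cons g u) then show ?case by (cases g) auto
qed simp

lemma noB_le: "B \<notin> set u \<Longrightarrow> La u \<le> Ra u"
proof (induction u)
  case (Cons g u) then show ?case by (cases g) auto
qed simp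
lemma noB_lt: "B \<notin> set u \<Longrightarrow> C \<in> set u \<Longrightarrow> La u < Ra u"
proof (induction u)
  case (Cons g u) then show ?case using noB_le[of u] by (cases g) auto
qed simp

definition WT :: "'k::field fa \<Rightarrow> (int \<times> int) set" where
  "WT x = (\<lambda>u. (La u, Ld u)) ` ks x"
lemma WT_fin: "finite (WT x)" by (simp add: WT_def)

lemma sum_ind: "finite G \<Longrightarrow> (La u, Ld u) \<in> G \<Longrightarrow>
   (\<Sum>g\<in>G. pm_smult (if nobc u \<and> La u = fst g \<and> Ld u = snd g then 1 else 0) (mon (fst g) (snd g) :: 'k::field fa))
   = (if nobc u then mon (La u) (Ld u) else 0)"
proof -
  assume G: "finite G" "(La u, Ld u) \<in> G"
  have "(\<Sum>g\<in>G. pm_smult (if nobc u \<and> La u = fst g \<and> Ld u = snd g then 1 else 0) (mon (fst g) (snd g) :: 'k fa))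
      = (\<Sum>g\<in>G. if (La u, Ld u) = g then (if nobc u then mon (fst g) (snd g) else 0) else 0)"
    by (intro sum.cong) auto
  also have "\<dots> = (if nobc u then mon (La u) (Ld u) else 0)"
    using G by (subst sum.delta') auto
  finally show ?thesis .
qed

lemma eps_sum: fixes x :: "'k::field fa" shows "finite G \<Longrightarrow> WT x \<subseteq> G \<Longrightarrow> eps x = (\<Sum>g\<in>G. th (fst g) (snd g) x)"
proof -
  assume G: "finite G" "WT x \<subseteq> G"
  have "(\<Sum>g\<in>G. th (fst g) (snd g) x) = lf (\<lambda>u. \<Sum>g\<in>G. if nobc u \<and> La u = fst g \<and> Ld u = snd g then 1 else 0) x"
    unfolding th_def by (simp add: lf_fsum)
  also have "\<dots> = lf (\<lambda>u. prod_list (map eps_gen u)) x"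
  proof (rule lf_cong)
    fix u assume "u \<in> ks x"
    then have "(La u, Ld u) \<in> G" using G unfolding WT_def by auto
    have "(\<Sum>g\<in>G. if nobc u \<and> La u = fst g \<and> Ld u = snd g then 1 else 0)
        = (\<Sum>g\<in>G. if (La u, Ld u) = g then (if nobc u then 1 else (0::'k)) else 0)"
      by (intro sum.cong) auto
    also have "\<dots> = (if nobc u then 1 else 0)" using G \<open>(La u, Ld u) \<in> G\<close> by (subst sum.delta') auto
    finally show "(\<Sum>g\<in>G. if nobc u \<and> La u = fst g \<and> Ld u = snd g then 1 else 0) = (prod_list (map eps_gen u) :: 'k)"
      by (simp only: eps_word)
  qed
  finally show ?thesis by (simp add: eps_eq)
qed

lemma Texp: fixes x :: "'k::field fa" shows "finite G \<Longrightarrow> WT x \<subseteq> G \<Longrightarrow>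
   x - (\<Sum>g\<in>G. pm_smult (th (fst g) (snd g) x) (mon (fst g) (snd g))) \<in> J_T"
proof -
  assume G: "finite G" "WT x \<subseteq> G"
  have "(\<Sum>g\<in>G. pm_smult (th (fst g) (snd g) x) (mon (fst g) (snd g)))
     = lin (\<lambda>u. \<Sum>g\<in>G. pm_smult (if nobc u \<and> La u = fst g \<and> Ld u = snd g then 1 else 0) (mon (fst g) (snd g))) x"
    unfolding th_def by (simp add: lin_fsum lin_const)
  then have "x - (\<Sum>g\<in>G. pm_smult (th (fst g) (snd g) x) (mon (fst g) (snd g)))
     = lin (\<lambda>u. wd u - (\<Sum>g\<in>G. pm_smult (if nobc u \<and> La u = fst g \<and> Ld u = snd g then 1 else 0) (mon (fst g) (snd g)))) x"
    by (simp add: lin_fdiff lin_wd)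
  also have "\<dots> \<in> J_T" unfolding J_T_def
  proof (rule I_lin)
    fix u assume "u \<in> ks x"
    then have "(La u, Ld u) \<in> G" using G unfolding WT_def by auto
    then have e: "(\<Sum>g\<in>G. pm_smult (if nobc u \<and> La u = fst g \<and> Ld u = snd g then 1 else 0) (mon (fst g) (snd g) :: 'k fa))
       = (if nobc u then mon (La u) (Ld u) else 0)" using sum_ind G(1) by blast
    have "wd u - (if nobc u then mon (La u) (Ld u) else 0) \<in> (J_T :: 'k fa set)"
    proof (cases "nobc u")
      case True
      then show ?thesis using N_JB[OF True] JB_JT by auto
    next
      case False
      then have "wd u \<in> (J_T :: 'k fa set)" using JT_word JB_word JB_JT unfolding nobc_def by blast
      then show ?thesis using False by auto
    qed
    then show "wd u - (\<Sum>g\<in>G. pm_smult (if nobc u \<and> La u = fst g \<and> Ld u = snd g then 1 else 0) (mon (fst g) (snd g)) :: 'k fa)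
      \<in> I (rels_GL2 \<union> {wd [B], wd [C]})" unfolding e J_T_def .
  qed
  finally show ?thesis .
qed



lemma JT_sum: "(\<And>k. k \<in> S \<Longrightarrow> f k \<in> J_T) \<Longrightarrow> (\<Sum>k\<in>S. f k) \<in> J_T"
  unfolding J_T_def by (rule I_sum)

lemma PLPR: fixes x :: "'k::field fa"
  shows "PL p q (PR p q x) - pm_smult (th p q x) (mon p q) \<in> J_B"
proof -
  have 1: "PL p q (PR p q x) = lin (\<lambda>u. if Ra u = p \<and> Rd u = q \<and> La u = p \<and> Ld u = q then wd u else 0) x"
    unfolding PL_def PR_def lin_comp by (rule lin_cong) (simp add: wd_eq)
  have 2: "pm_smult (th p q x) (mon p q) = lin (\<lambda>u. pm_smult (if nobc u \<and> La u = p \<and> Ld u = q then 1 else 0) (mon p q)) x"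
    unfolding th_def by (simp add: lin_const)
  have eq: "PL p q (PR p q x) - pm_smult (th p q x) (mon p q) =
     lin (\<lambda>u. (if Ra u = p \<and> Rd u = q \<and> La u = p \<and> Ld u = q then wd u else 0) -
               pm_smult (if nobc u \<and> La u = p \<and> Ld u = q then 1 else 0) (mon p q)) x"
    unfolding 1 2 by (simp add: lin_fdiff)
  have "lin (\<lambda>u. (if Ra u = p \<and> Rd u = q \<and> La u = p \<and> Ld u = q then wd u else 0) -
               pm_smult (if nobc u \<and> La u = p \<and> Ld u = q then 1 else 0) (mon p q)) x \<in> (J_B :: 'k fa set)"
    unfolding J_B_def
  proof (rule I_lin)
    fix u
    have "(if Ra u = p \<and> Rd u = q \<and> La u = p \<and> Ld u = q then wd u else 0) -
               pm_smult (if nobc u \<and> La u = p \<and> Ld u = q then 1 else 0) (mon p q) \<in> (J_B :: 'k fa set)"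
    proof (cases "nobc u")
      case True
      then have "Ra u = La u" "Rd u = Ld u" using nobc_R by auto
      then show ?thesis using True N_JB[OF True] by (auto intro: JB_zero)
    next
      case False
      show ?thesis
      proof (cases "Ra u = p \<and> Rd u = q \<and> La u = p \<and> Ld u = q")
        case True
        then have "La u = Ra u" by simp
        then have "B \<in> set u" using False noB_lt[of u] unfolding nobc_def by force
        then show ?thesis using True False JB_word by auto
      next
        case F: False then show ?thesis using False by (auto intro: JB_zero)
      qed
    qed
    then show "((if Ra u = p \<and> Rd u = q \<and> La u = p \<and> Ld u = q then wd u else 0) -
               pm_smult (if nobc u \<and> La u = p \<and> Ld u = q then 1 else 0) (mon p q) :: 'k fa) \<in> I (rels_GL2 \<union> {wd [B]})"
      unfolding J_B_def .
  qed
  then show ?thesis unfolding eq .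
qed

theorem mainTheorem15:
  fixes n :: nat and X :: "nat \<Rightarrow> nat \<Rightarrow> 'k::field fa" and i j :: int
  assumes "is_OB_comodule n X"
    and "\<And>p q. is_weight n X (mon p q) \<Longrightarrow> mon p q - mon i j \<in> J_T"
  shows "\<forall>r<n. \<forall>s<n. X r s - (if r = s then mon i j else 0) \<in> J_B"
proof -
  note hco = assms(1)[unfolded is_OB_comodule_def]
  have co: "Delta (X r s) - (\<Sum>k<n. tens (X k s) (X r k)) \<in> tens_ideal J_B" if "r<n" "s<n" for r s
    using hco that by blast
  have ep: "eps (X r s) = (if r = s then 1 else 0)" if "r<n" "s<n" for r s
    using hco that by blast
  define E where "E p q r s = th p q (X r s)" for p q r s
  have F1: "PL p q (X r s) - (\<Sum>k<n. pm_smult (E p q k s) (X r k)) \<in> J_B" if "r<n" "s<n" for p q r s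
    using TL_JB[OF co[OF that], of p q] by (simp add: TL_Delta TL_tens E_def)
  have F2: "PR p q (X r s) - (\<Sum>k<n. pm_smult (E p q r k) (X k s)) \<in> J_B" if "r<n" "s<n" for p q r s
    using TR_JB[OF co[OF that], of p q] by (simp add: TR_Delta TR_tens E_def)
  have F3: "(\<Sum>k<n. E p q k s * E a b r k) = (if a = p \<and> b = q then E p q r s else 0)"
    if "r<n" "s<n" for p q a b r s
  proof -
    have "th a b (PL p q (X r s) - (\<Sum>k<n. pm_smult (E p q k s) (X r k))) = 0"
      using th_JB F1[OF that] by blast
    then have "(if a = p \<and> b = q then E p q r s else 0) - (\<Sum>k<n. E p q k s * E a b r k) = 0"
      by (simp only: th_diff th_sum th_smult th_PL E_def)
    from iffD2[OF eq_iff_diff_eq_0 this] show ?thesis by (rule sym)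
  qed
  define W where "W = (\<Union>r\<in>{..<n}. \<Union>s\<in>{..<n}. WT (X r s))"
  have Wfin: "finite W" unfolding W_def by (simp add: WT_fin)
  have WW: "WT (X r s) \<subseteq> W" if "r<n" "s<n" for r s using that unfolding W_def by blast
  have F7: "E p q r0 s0 = 0" if ne: "(p,q) \<noteq> (i,j)" and r0: "r0<n" and s0: "s0<n" for p q r0 s0
  proof (rule ccontr)
    assume nz: "E p q r0 s0 \<noteq> 0"
    define w where "w = (\<lambda>k. E p q k s0)"
    let ?G = "insert (p,q) W"
    have fin: "finite ?G" using Wfin by simp
    have ws: "in_weight_space n X (mon p q) w"
      unfolding in_weight_space_def fa_smult_eq
    proof (intro allI impI)
      fix r assume r: "r<n"
      have T: "(\<Sum>k<n. pm_smult (w k) (X r k - (\<Sum>g\<in>?G. pm_smult (E (fst g) (snd g) r k) (mon (fst g) (snd g))))) \<in> J_T"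
      proof (rule JT_sum)
        fix k assume "k \<in> {..<n}"
        then have "WT (X r k) \<subseteq> ?G" using WW[OF r] by auto
        from Texp[OF fin this] show "pm_smult (w k) (X r k - (\<Sum>g\<in>?G. pm_smult (E (fst g) (snd g) r k) (mon (fst g) (snd g)))) \<in> J_T"
          unfolding E_def by (rule JT_smult)
      qed
      have S: "(\<Sum>k<n. pm_smult (w k) (\<Sum>g\<in>?G. pm_smult (E (fst g) (snd g) r k) (mon (fst g) (snd g)))) = pm_smult (w r) (mon p q)"
      proof -
        have "(\<Sum>k<n. pm_smult (w k) (\<Sum>g\<in>?G. pm_smult (E (fst g) (snd g) r k) (mon (fst g) (snd g))))
            = (\<Sum>k<n. \<Sum>g\<in>?G. pm_smult (w k * E (fst g) (snd g) r k) (mon (fst g) (snd g)))"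
          by (simp add: smult_sum_r)
        also have "\<dots> = (\<Sum>g\<in>?G. \<Sum>k<n. pm_smult (w k * E (fst g) (snd g) r k) (mon (fst g) (snd g)))"
          by (rule sum.swap)
        also have "\<dots> = (\<Sum>g\<in>?G. pm_smult (\<Sum>k<n. E p q k s0 * E (fst g) (snd g) r k) (mon (fst g) (snd g)))"
          by (simp add: smult_sum_l w_def)
        also have "\<dots> = (\<Sum>g\<in>?G. if (p,q) = g then pm_smult (E p q r s0) (mon p q) else 0)"
          by (intro sum.cong refl) (auto simp: F3[OF r s0])
        also have "\<dots> = pm_smult (w r) (mon p q)" by (simp add: w_def sum.delta'[OF fin])
        finally show ?thesis .
      qed
      from T S show "(\<Sum>k<n. pm_smult (w k) (X r k)) - pm_smult (w r) (mon p q) \<in> J_T"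
        by (simp add: smult_minus_r sum_subtractf)
    qed
    have "is_weight n X (mon p q)" unfolding is_weight_def using ws nz r0 by (auto simp: w_def)
    note h = th_JT[OF assms(2)[OF this], of p q]
    from h ne show False by (auto simp: th_mon split: if_splits)
  qed
  have F8: "E i j r s = (if r = s then 1 else 0)" if r: "r<n" and s: "s<n" for r s
  proof -
    have "WT (X r s) \<subseteq> insert (i,j) W" using WW[OF r s] by auto
    from eps_sum[OF _ this] Wfin have "eps (X r s) = (\<Sum>g\<in>insert (i,j) W. E (fst g) (snd g) r s)"
      by (simp add: E_def)
    also have "\<dots> = E i j r s + (\<Sum>g\<in>W - {(i,j)}. E (fst g) (snd g) r s)"
      using Wfin by (simp add: sum.insert_remove)
    also have "(\<Sum>g\<in>W - {(i,j)}. E (fst g) (snd g) r s) = 0"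
      by (rule sum.neutral) (use F7 r s in force)
    finally show ?thesis using ep[OF r s] by simp
  qed
  show ?thesis
  proof (intro allI impI)
    fix r s assume r: "r<n" and s: "s<n"
    have "(\<Sum>k<n. pm_smult (E i j k s) (X r k)) = (\<Sum>k<n. if k = s then X r k else 0)"
      by (intro sum.cong refl) (simp add: F8 s)
    also have "\<dots> = X r s" using s by (simp add: sum.delta)
    finally have s1: "(\<Sum>k<n. pm_smult (E i j k s) (X r k)) = X r s" .
    have "(\<Sum>k<n. pm_smult (E i j r k) (X k s)) = (\<Sum>k<n. if k = r then X k s else 0)"
      by (intro sum.cong refl) (auto simp: F8 r)
    also have "\<dots> = X r s" using r by (simp add: sum.delta)
    finally have s2: "(\<Sum>k<n. pm_smult (E i j r k) (X k s)) = X r s" .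
    have "PL i j (X r s) - X r s \<in> J_B" using F1[OF r s, of i j] unfolding s1 .
    then have "- (PL i j (X r s) - X r s) \<in> J_B" unfolding J_B_def by (rule I_uminus)
    then have a1: "X r s - PL i j (X r s) \<in> J_B" by simp
    have "PR i j (X r s) - X r s \<in> J_B" using F2[OF r s, of i j] unfolding s2 .
    then have "- (PR i j (X r s) - X r s) \<in> J_B" unfolding J_B_def by (rule I_uminus)
    then have a2: "X r s - PR i j (X r s) \<in> J_B" by simp
    have a3: "PL i j (X r s - PR i j (X r s)) \<in> J_B" by (rule PL_JB[OF a2])
    have a4: "X r s - PL i j (PR i j (X r s)) \<in> J_B"
      using JB_add[OF a1 a3] by (simp add: algebra_simps)
    have a5: "PL i j (PR i j (X r s)) - pm_smult (E i j r s) (mon i j) \<in> J_B"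
      using PLPR unfolding E_def by blast
    have "X r s - pm_smult (E i j r s) (mon i j) \<in> J_B"
      using JB_add[OF a4 a5] by simp
    then show "X r s - (if r = s then mon i j else 0) \<in> J_B" using F8[OF r s] by (cases "r = s") auto
  qed
qed


end
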